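(* Fix a positive integer $R$ and let $b_R(n)=1-\frac{1}{2^n}\sum_{k=0}^n\binom{n}{k}\max\big(\frac1R,2^{-\min(k,n-k)}\big)$. Then $\lim_{n\to\infty}b_R(n)=\frac{R-1}{R}$; consequently $\limsup_{n\to\infty}\sup\{\mathcal{C}(\ket{\psi}):\ket{\psi}\text{ an }n\text{-qubit pure state with }\mathrm{rk}(\ket{\psi})=R\}\le\frac{R-1}{R}$, i.e. asymptotically a state of CP rank $R$ has concentratable entanglement at most $\frac{R-1}{R}$.
   Context: The CP rank $\mathrm{rk}(\ket{\psi})$ of an $n$-qubit state is the minimal $r$ with $\ket{\psi}=\sum_{i=1}^r c_i\bigotimes_{j=1}^n\ket{\phi_i^{(j)}}$. The concentratable entanglement is $\mathcal{C}(\ket{\psi})=1-\frac{1}{2^{n}}\sum_{\alpha\subseteq [n]}\mathrm{Tr}[\rho_\alpha^2]$, with $\rho_\alpha$ the reduced state on $\alpha$ and $\mathrm{Tr}[\rho_\emptyset^2]=1$. *)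

theory Defs
  imports "HOL-Analysis.Analysis" "HOL-Library.Liminf_Limsup"
begin

text \<open>Qubits are indexed 0..n-1.
  A (not necessarily normalized) n-qubit vector is a function from bit strings to amplitudes;
  only its values on strings of length n matter.\<close>

definition bits :: "nat \<Rightarrow> bool list set" where
  "bits n = {xs. length xs = n}"

definition is_pure_state :: "nat \<Rightarrow> (bool list \<Rightarrow> complex) \<Rightarrow> bool" where
  "is_pure_state n \<psi> \<longleftrightarrow> (\<Sum>x\<in>bits n. (cmod (\<psi> x))\<^sup>2) = 1"

definition cp_rank :: "nat \<Rightarrow> (bool list \<Rightarrow> complex) \<Rightarrow> nat" where
  "cp_rank n \<psi> = (LEAST r. \<exists>(c :: nat \<Rightarrow> complex) (\<phi> :: nat \<Rightarrow> nat \<Rightarrow> bool \<Rightarrow> complex).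
      \<forall>x\<in>bits n. \<psi> x = (\<Sum>i<r. c i * (\<Prod>j<n. \<phi> i j (x ! j))))"

definition combine :: "nat \<Rightarrow> nat set \<Rightarrow> bool list \<Rightarrow> bool list \<Rightarrow> bool list" where
  "combine n \<alpha> x y = map (\<lambda>i. if i \<in> \<alpha> then x ! i else y ! i) [0..<n]"

text \<open>Basis strings for the subsystem \<alpha> (canonical representatives: zero outside \<alpha>).\<close>
definition sub_bits :: "nat \<Rightarrow> nat set \<Rightarrow> bool list set" where
  "sub_bits n \<alpha> = {x\<in>bits n. \<forall>i<n. i \<notin> \<alpha> \<longrightarrow> \<not> x ! i}"

text \<open>Reduced density matrix rho_alpha = Tr_{complement of alpha} |psi><psi|.\<close>
definition reduced_state :: "nat \<Rightarrow> nat set \<Rightarrow> (bool list \<Rightarrow> complex) \<Rightarrow> bool list \<Rightarrow> bool list \<Rightarrow> complex" where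
  "reduced_state n \<alpha> \<psi> a a' =
     (\<Sum>b\<in>sub_bits n ({0..<n} - \<alpha>). \<psi> (combine n \<alpha> a b) * cnj (\<psi> (combine n \<alpha> a' b)))"

definition purity :: "nat \<Rightarrow> nat set \<Rightarrow> (bool list \<Rightarrow> complex) \<Rightarrow> real" where
  "purity n \<alpha> \<psi> = Re (\<Sum>a\<in>sub_bits n \<alpha>. \<Sum>a'\<in>sub_bits n \<alpha>.
      reduced_state n \<alpha> \<psi> a a' * reduced_state n \<alpha> \<psi> a' a)"

definition conc_ent :: "nat \<Rightarrow> (bool list \<Rightarrow> complex) \<Rightarrow> real" where
  "conc_ent n \<psi> = 1 - (1 / 2 ^ n) * (\<Sum>\<alpha>\<in>Pow {0..<n}. purity n \<alpha> \<psi>)"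

definition b_R :: "nat \<Rightarrow> nat \<Rightarrow> real" where
  "b_R R n = 1 - (1 / 2 ^ n) * (\<Sum>k=0..n. real (n choose k) * max (1 / real R) ((1/2) ^ min k (n - k)))"

end

theory Submission
  imports Defs
begin

definition ip :: "'a set \<Rightarrow> ('a \<Rightarrow> complex) \<Rightarrow> ('a \<Rightarrow> complex) \<Rightarrow> complex" where
  "ip S f g = (\<Sum>a\<in>S. cnj (f a) * g a)"

definition orthonormal :: "'a set \<Rightarrow> nat \<Rightarrow> (nat \<Rightarrow> 'a \<Rightarrow> complex) \<Rightarrow> bool" where
  "orthonormal S m e \<longleftrightarrow> (\<forall>k<m. \<forall>l<m. ip S (e k) (e l) = (if k = l then 1 else 0))"

lemma ip_sum_right:
  "ip S f (\<lambda>a. \<Sum>k<m. c k * g k a) = (\<Sum>k<m. c k * ip S f (g k))"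
  unfolding ip_def by (simp add: sum_distrib_left sum_distrib_right algebra_simps sum.swap[of _ S])

lemma ip_sum_left:
  "ip S (\<lambda>a. \<Sum>k<m. c k * g k a) f = (\<Sum>k<m. cnj (c k) * ip S (g k) f)"
  unfolding ip_def by (simp add: sum_distrib_left sum_distrib_right algebra_simps sum.swap[of _ S])

lemma ip_coords:
  assumes "orthonormal S m e"
  shows "ip S (\<lambda>a. \<Sum>k<m. c k * e k a) (\<lambda>a. \<Sum>k<m. d k * e k a) = (\<Sum>k<m. cnj (c k) * d k)"
proof -
  have "ip S (\<lambda>a. \<Sum>k<m. c k * e k a) (\<lambda>a. \<Sum>k<m. d k * e k a)
     = (\<Sum>k<m. cnj (c k) * (\<Sum>l<m. d l * ip S (e k) (e l)))"
    by (simp add: ip_sum_left ip_sum_right)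
  also have "\<dots> = (\<Sum>k<m. cnj (c k) * d k)"
  proof (rule sum.cong[OF refl])
    fix k assume "k \<in> {..<m}"
    hence "(\<Sum>l<m. d l * ip S (e k) (e l)) = (\<Sum>l<m. if l = k then d l else 0)"
      using assms unfolding orthonormal_def by (intro sum.cong) auto
    also have "\<dots> = d k" using \<open>k \<in> {..<m}\<close> by simp
    finally show "cnj (c k) * (\<Sum>l<m. d l * ip S (e k) (e l)) = cnj (c k) * d k" by simp
  qed
  finally show ?thesis .
qed

lemma gram_schmidt_ex:
  assumes "finite S"
  shows "\<exists>m e. m \<le> R \<and> orthonormal S m e \<and>
           (\<forall>i<R. \<exists>c. \<forall>a\<in>S. u i a = (\<Sum>k<m. c k * e k a))"
proof (induction R)
  case 0
  then show ?case by (auto simp: orthonormal_def)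
next
  case (Suc R)
  then obtain m e where m: "m \<le> R" and on: "orthonormal S m e"
    and sp: "\<forall>i<R. \<exists>c. \<forall>a\<in>S. u i a = (\<Sum>k<m. c k * e k a)" by blast
  define x where "x = u R"
  define w where "w a = x a - (\<Sum>k<m. ip S (e k) x * e k a)" for a
  define N where "N = (\<Sum>a\<in>S. (cmod (w a))\<^sup>2)"
  have N0: "N \<ge> 0" unfolding N_def by (simp add: sum_nonneg)
  have ipw: "ip S w w = of_real N"
    unfolding ip_def N_def of_real_sum
    by (rule sum.cong[OF refl]) (simp only: complex_norm_square mult.commute)
  have orth: "ip S (e l) w = 0" if "l < m" for l
  proof -
    have "ip S (e l) w = ip S (e l) x - ip S (e l) (\<lambda>a. \<Sum>k<m. ip S (e k) x * e k a)"
      unfolding w_def ip_def by (simp add: algebra_simps sum_subtractf)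
    also have "\<dots> = ip S (e l) x - (\<Sum>k<m. ip S (e k) x * ip S (e l) (e k))"
      by (simp add: ip_sum_right)
    also have "(\<Sum>k<m. ip S (e k) x * ip S (e l) (e k)) = (\<Sum>k<m. if k = l then ip S (e k) x else 0)"
      using on that unfolding orthonormal_def by (intro sum.cong) auto
    also have "\<dots> = ip S (e l) x" using that by simp
    finally show ?thesis by simp
  qed
  show ?case
  proof (cases "N = 0")
    case True
    have "w a = 0" if "a \<in> S" for a
      using True assms that unfolding N_def by (simp add: sum_nonneg_eq_0_iff)
    hence "\<forall>a\<in>S. u R a = (\<Sum>k<m. ip S (e k) x * e k a)"
      unfolding w_def x_def by auto
    hence "\<forall>i<Suc R. \<exists>c. \<forall>a\<in>S. u i a = (\<Sum>k<m. c k * e k a)"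
      using sp by (metis less_Suc_eq)
    then show ?thesis using m on by (intro exI[of _ m] exI[of _ e]) auto
  next
    case False
    hence Np: "N > 0" using N0 by simp
    define s where "s = complex_of_real (sqrt N)"
    have s0: "s \<noteq> 0" using Np by (simp add: s_def)
    have ss: "cnj s * s = of_real N"
    proof -
      have "cnj s * s = of_real (sqrt N * sqrt N)" unfolding s_def by (simp only: complex_cnj_complex_of_real of_real_mult)
      also have "sqrt N * sqrt N = N" using N0 by simp
      finally show ?thesis .
    qed
    define e' where "e' = e(m := (\<lambda>a. w a / s))"
    have e'_old: "e' k = e k" if "k < m" for k using that by (simp add: e'_def)
    have ipm: "ip S (e' m) (e' m) = 1"
    proof -
      have "ip S (e' m) (e' m) = ip S w w / (cnj s * s)"
        unfolding e'_def ip_def by (simp add: sum_divide_distrib)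
      thus ?thesis using ipw ss Np by simp
    qed
    have ipl: "ip S (e' l) (e' m) = 0" if "l < m" for l
    proof -
      have "ip S (e' l) (e' m) = ip S (e l) w / s"
        using that unfolding e'_def ip_def by (simp add: sum_divide_distrib)
      thus ?thesis using orth[OF that] by simp
    qed
    have ipr: "ip S (e' m) (e' l) = 0" if "l < m" for l
    proof -
      have "ip S (e' m) (e' l) = cnj (ip S (e l) w) / cnj s"
        using that unfolding e'_def ip_def by (simp add: sum_divide_distrib mult.commute)
      thus ?thesis using orth[OF that] by simp
    qed
    have on': "orthonormal S (Suc m) e'"
      unfolding orthonormal_def
    proof (intro allI impI)
      fix k l assume k: "k < Suc m" and l: "l < Suc m"
      show "ip S (e' k) (e' l) = (if k = l then 1 else 0)"
      proof (cases "k = m")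
        case True thus ?thesis using l ipm ipr by (cases "l = m") auto
      next
        case False
        hence k': "k < m" using k by simp
        show ?thesis
        proof (cases "l = m")
          case True thus ?thesis using ipl k' by auto
        next
          case False thus ?thesis using k' l on e'_old unfolding orthonormal_def by auto
        qed
      qed
    qed
    have spR: "\<exists>c. \<forall>a\<in>S. u R a = (\<Sum>k<Suc m. c k * e' k a)"
    proof (intro exI[of _ "(\<lambda>k. ip S (e k) x)(m := s)"] ballI)
      fix a assume "a \<in> S"
      have "(\<Sum>k<Suc m. ((\<lambda>k. ip S (e k) x)(m := s)) k * e' k a)
          = (\<Sum>k<m. ip S (e k) x * e k a) + s * (w a / s)"
        by (simp add: e'_def)
      also have "\<dots> = u R a" using s0 by (simp add: w_def x_def)
      finally show "u R a = (\<Sum>k<Suc m. ((\<lambda>k. ip S (e k) x)(m := s)) k * e' k a)" by simp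
    qed
    have spO: "\<exists>c. \<forall>a\<in>S. u i a = (\<Sum>k<Suc m. c k * e' k a)" if iR: "i < R" for i
    proof -
      obtain c where c: "\<forall>a\<in>S. u i a = (\<Sum>k<m. c k * e k a)" using sp iR by blast
      show ?thesis
      proof (intro exI[of _ "c(m := 0)"] ballI)
        fix a assume "a \<in> S"
        thus "u i a = (\<Sum>k<Suc m. (c(m := 0)) k * e' k a)"
          using c by (simp add: e'_def)
      qed
    qed
    show ?thesis
      using m on' spR spO by (intro exI[of _ "Suc m"] exI[of _ e']) (auto simp: less_Suc_eq)
  qed
qed

lemma cs_card:
  fixes t :: "nat \<Rightarrow> real"
  shows "(\<Sum>k<m. t k)\<^sup>2 \<le> real m * (\<Sum>k<m. (t k)\<^sup>2)"
  using Cauchy_Schwarz_ineq_sum[of t "\<lambda>_. 1" "{..<m}"] by (simp add: mult.commute)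

lemma gram_swap:
  fixes d :: "'b \<Rightarrow> nat \<Rightarrow> complex"
  shows "(\<Sum>b\<in>T. \<Sum>b'\<in>T. (cmod (\<Sum>k<m. cnj (d b k) * d b' k))\<^sup>2)
       = (\<Sum>k<m. \<Sum>l<m. (cmod (\<Sum>b\<in>T. d b k * cnj (d b l)))\<^sup>2)"
proof -
  have "complex_of_real (\<Sum>b\<in>T. \<Sum>b'\<in>T. (cmod (\<Sum>k<m. cnj (d b k) * d b' k))\<^sup>2)
     = (\<Sum>b\<in>T. \<Sum>b'\<in>T. (\<Sum>k<m. cnj (d b k) * d b' k) * (\<Sum>l<m. d b l * cnj (d b' l)))"
    by (simp add: of_real_sum complex_norm_square cnj_sum mult.commute del: of_real_power)
  also have "\<dots> = (\<Sum>b\<in>T. \<Sum>b'\<in>T. \<Sum>k<m. \<Sum>l<m. cnj (d b k) * d b' k * d b l * cnj (d b' l))"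
    by (simp add: sum_product mult.assoc)
  also have "\<dots> = (\<Sum>k<m. \<Sum>l<m. \<Sum>b\<in>T. \<Sum>b'\<in>T. cnj (d b k) * d b' k * d b l * cnj (d b' l))"
    (is "(\<Sum>b\<in>T. \<Sum>b'\<in>T. \<Sum>k<m. \<Sum>l<m. ?f b b' k l) = _")
  proof -
    have "(\<Sum>b\<in>T. \<Sum>b'\<in>T. \<Sum>k<m. \<Sum>l<m. ?f b b' k l) = (\<Sum>b\<in>T. \<Sum>k<m. \<Sum>b'\<in>T. \<Sum>l<m. ?f b b' k l)"
      by (rule sum.cong[OF refl], rule sum.swap)
    also have "\<dots> = (\<Sum>b\<in>T. \<Sum>k<m. \<Sum>l<m. \<Sum>b'\<in>T. ?f b b' k l)"
      by (rule sum.cong[OF refl], rule sum.cong[OF refl], rule sum.swap)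
    also have "\<dots> = (\<Sum>k<m. \<Sum>b\<in>T. \<Sum>l<m. \<Sum>b'\<in>T. ?f b b' k l)"
      by (rule sum.swap)
    also have "\<dots> = (\<Sum>k<m. \<Sum>l<m. \<Sum>b\<in>T. \<Sum>b'\<in>T. ?f b b' k l)"
      by (rule sum.cong[OF refl], rule sum.swap)
    finally show ?thesis .
  qed
  also have "\<dots> = (\<Sum>k<m. \<Sum>l<m. (\<Sum>b\<in>T. d b l * cnj (d b k)) * (\<Sum>b'\<in>T. d b' k * cnj (d b' l)))"
    by (intro sum.cong refl) (simp only: sum_product, simp add: mult_ac)
  also have "\<dots> = complex_of_real (\<Sum>k<m. \<Sum>l<m. (cmod (\<Sum>b\<in>T. d b k * cnj (d b l)))\<^sup>2)"
  proof -
    have e: "(\<Sum>b\<in>T. d b l * cnj (d b k)) * (\<Sum>b'\<in>T. d b' k * cnj (d b' l))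
       = complex_of_real ((cmod (\<Sum>b\<in>T. d b l * cnj (d b k)))\<^sup>2)" for k l
      by (simp only: complex_norm_square cnj_sum complex_cnj_mult complex_cnj_cnj mult.commute)
    show ?thesis
      apply (simp only: e of_real_sum)
      by (rule sum.swap)
  qed
  finally show ?thesis using of_real_eq_iff by blast
qed

lemma sum4_swap:
  "(\<Sum>a\<in>A. \<Sum>a'\<in>A'. \<Sum>b\<in>B. \<Sum>b'\<in>B'. f a a' b b') = (\<Sum>b\<in>B. \<Sum>b'\<in>B'. \<Sum>a\<in>A. \<Sum>a'\<in>A'. f a a' b b')"
proof -
  have "(\<Sum>a\<in>A. \<Sum>a'\<in>A'. \<Sum>b\<in>B. \<Sum>b'\<in>B'. f a a' b b') = (\<Sum>a\<in>A. \<Sum>b\<in>B. \<Sum>a'\<in>A'. \<Sum>b'\<in>B'. f a a' b b')"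
    by (rule sum.cong[OF refl], rule sum.swap)
  also have "\<dots> = (\<Sum>a\<in>A. \<Sum>b\<in>B. \<Sum>b'\<in>B'. \<Sum>a'\<in>A'. f a a' b b')"
    by (rule sum.cong[OF refl], rule sum.cong[OF refl], rule sum.swap)
  also have "\<dots> = (\<Sum>b\<in>B. \<Sum>a\<in>A. \<Sum>b'\<in>B'. \<Sum>a'\<in>A'. f a a' b b')"
    by (rule sum.swap)
  also have "\<dots> = (\<Sum>b\<in>B. \<Sum>b'\<in>B'. \<Sum>a\<in>A. \<Sum>a'\<in>A'. f a a' b b')"
    by (rule sum.cong[OF refl], rule sum.swap)
  finally show ?thesis .
qed

lemma ip_self: "ip S f f = complex_of_real (\<Sum>a\<in>S. (cmod (f a))\<^sup>2)"
  unfolding ip_def of_real_sum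
  by (rule sum.cong[OF refl]) (simp only: complex_norm_square mult.commute)

lemma purity_core:
  fixes \<Psi> :: "'a \<Rightarrow> 'b \<Rightarrow> complex"
  assumes S: "finite S" and T: "finite T"
    and dec: "\<And>a b. a \<in> S \<Longrightarrow> b \<in> T \<Longrightarrow> \<Psi> a b = (\<Sum>i<R. u i a * w i b)"
  shows "(\<Sum>b\<in>T. \<Sum>a\<in>S. (cmod (\<Psi> a b))\<^sup>2)\<^sup>2 \<le> real R *
     Re (\<Sum>a\<in>S. \<Sum>a'\<in>S. (\<Sum>b\<in>T. \<Psi> a b * cnj (\<Psi> a' b)) * (\<Sum>b\<in>T. \<Psi> a' b * cnj (\<Psi> a b)))"
proof -
  obtain m e where m: "m \<le> R" and on: "orthonormal S m e"
    and sp: "\<forall>i<R. \<exists>c. \<forall>a\<in>S. u i a = (\<Sum>k<m. c k * e k a)"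
    using gram_schmidt_ex[OF S, of R u] by blast
  have "\<forall>i. \<exists>c. i < R \<longrightarrow> (\<forall>a\<in>S. u i a = (\<Sum>k<m. c k * e k a))" using sp by blast
  from choice[OF this] obtain C where C: "\<And>i a. i < R \<Longrightarrow> a \<in> S \<Longrightarrow> u i a = (\<Sum>k<m. C i k * e k a)"
    by blast
  define d where "d b k = (\<Sum>i<R. w i b * C i k)" for b k
  have coord: "\<Psi> a b = (\<Sum>k<m. d b k * e k a)" if a: "a \<in> S" and b: "b \<in> T" for a b
  proof -
    have "\<Psi> a b = (\<Sum>i<R. (\<Sum>k<m. C i k * e k a) * w i b)"
      using dec[OF a b] C[OF _ a] by simp
    also have "\<dots> = (\<Sum>i<R. \<Sum>k<m. w i b * C i k * e k a)"
      by (simp add: sum_distrib_right sum_distrib_left mult_ac)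
    also have "\<dots> = (\<Sum>k<m. \<Sum>i<R. w i b * C i k * e k a)"
      by (rule sum.swap)
    also have "\<dots> = (\<Sum>k<m. d b k * e k a)"
      by (simp add: d_def sum_distrib_right)
    finally show ?thesis .
  qed
  have ipv: "ip S (\<lambda>a. \<Psi> a b) (\<lambda>a. \<Psi> a b') = (\<Sum>k<m. cnj (d b k) * d b' k)"
    if b: "b \<in> T" and b': "b' \<in> T" for b b'
  proof -
    have "ip S (\<lambda>a. \<Psi> a b) (\<lambda>a. \<Psi> a b') = ip S (\<lambda>a. \<Sum>k<m. d b k * e k a) (\<lambda>a. \<Sum>k<m. d b' k * e k a)"
      unfolding ip_def using coord b b' by (intro sum.cong) auto
    also have "\<dots> = (\<Sum>k<m. cnj (d b k) * d b' k)" by (rule ip_coords[OF on])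
    finally show ?thesis .
  qed
  define t where "t k = (\<Sum>b\<in>T. (cmod (d b k))\<^sup>2)" for k
  have t0: "t k \<ge> 0" for k unfolding t_def by (simp add: sum_nonneg)
  have trace: "(\<Sum>b\<in>T. \<Sum>a\<in>S. (cmod (\<Psi> a b))\<^sup>2) = (\<Sum>k<m. t k)"
  proof -
    have "complex_of_real (\<Sum>b\<in>T. \<Sum>a\<in>S. (cmod (\<Psi> a b))\<^sup>2) = (\<Sum>b\<in>T. ip S (\<lambda>a. \<Psi> a b) (\<lambda>a. \<Psi> a b))"
      by (simp only: of_real_sum ip_self)
    also have "\<dots> = (\<Sum>b\<in>T. \<Sum>k<m. cnj (d b k) * d b k)"
      using ipv by (intro sum.cong) auto
    also have "\<dots> = (\<Sum>b\<in>T. \<Sum>k<m. complex_of_real ((cmod (d b k))\<^sup>2))"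
      by (simp only: complex_norm_square mult.commute)
    also have "\<dots> = complex_of_real (\<Sum>k<m. t k)"
      unfolding t_def of_real_sum by (rule sum.swap)
    finally show ?thesis using of_real_eq_iff by blast
  qed
  have pur: "(\<Sum>a\<in>S. \<Sum>a'\<in>S. (\<Sum>b\<in>T. \<Psi> a b * cnj (\<Psi> a' b)) * (\<Sum>b\<in>T. \<Psi> a' b * cnj (\<Psi> a b)))
      = complex_of_real (\<Sum>b\<in>T. \<Sum>b'\<in>T. (cmod (\<Sum>k<m. cnj (d b k) * d b' k))\<^sup>2)"
  proof -
    have "(\<Sum>a\<in>S. \<Sum>a'\<in>S. (\<Sum>b\<in>T. \<Psi> a b * cnj (\<Psi> a' b)) * (\<Sum>b\<in>T. \<Psi> a' b * cnj (\<Psi> a b)))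
       = (\<Sum>a\<in>S. \<Sum>a'\<in>S. \<Sum>b\<in>T. \<Sum>b'\<in>T. (cnj (\<Psi> a' b) * \<Psi> a' b') * (cnj (\<Psi> a b') * \<Psi> a b))"
      by (intro sum.cong refl) (simp only: sum_product, simp add: mult_ac)
    also have "\<dots> = (\<Sum>b\<in>T. \<Sum>b'\<in>T. \<Sum>a\<in>S. \<Sum>a'\<in>S. (cnj (\<Psi> a' b) * \<Psi> a' b') * (cnj (\<Psi> a b') * \<Psi> a b))"
      by (rule sum4_swap)
    also have "\<dots> = (\<Sum>b\<in>T. \<Sum>b'\<in>T. ip S (\<lambda>a. \<Psi> a b) (\<lambda>a. \<Psi> a b') * ip S (\<lambda>a. \<Psi> a b') (\<lambda>a. \<Psi> a b))"
      unfolding ip_def by (intro sum.cong refl) (simp only: sum_product, subst sum.swap, simp add: mult_ac)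
    also have "\<dots> = (\<Sum>b\<in>T. \<Sum>b'\<in>T. complex_of_real ((cmod (ip S (\<lambda>a. \<Psi> a b) (\<lambda>a. \<Psi> a b')))\<^sup>2))"
    proof (intro sum.cong refl)
      fix b b'
      have "ip S (\<lambda>a. \<Psi> a b') (\<lambda>a. \<Psi> a b) = cnj (ip S (\<lambda>a. \<Psi> a b) (\<lambda>a. \<Psi> a b'))"
        unfolding ip_def by (simp add: cnj_sum mult.commute)
      thus "ip S (\<lambda>a. \<Psi> a b) (\<lambda>a. \<Psi> a b') * ip S (\<lambda>a. \<Psi> a b') (\<lambda>a. \<Psi> a b)
          = complex_of_real ((cmod (ip S (\<lambda>a. \<Psi> a b) (\<lambda>a. \<Psi> a b')))\<^sup>2)"
        by (simp only: complex_norm_square)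
    qed
    also have "\<dots> = complex_of_real (\<Sum>b\<in>T. \<Sum>b'\<in>T. (cmod (\<Sum>k<m. cnj (d b k) * d b' k))\<^sup>2)"
      unfolding of_real_sum using ipv by (intro sum.cong refl) auto
    finally show ?thesis .
  qed
  have "(\<Sum>k<m. (t k)\<^sup>2) \<le> (\<Sum>k<m. \<Sum>l<m. (cmod (\<Sum>b\<in>T. d b k * cnj (d b l)))\<^sup>2)"
  proof (rule sum_mono)
    fix k assume k: "k \<in> {..<m}"
    have "(\<Sum>b\<in>T. d b k * cnj (d b k)) = complex_of_real (t k)"
      unfolding t_def of_real_sum by (simp only: complex_norm_square)
    hence "(t k)\<^sup>2 = (cmod (\<Sum>b\<in>T. d b k * cnj (d b l)))\<^sup>2" if "l = k" for l
      using t0[of k] that by simp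
    hence "(t k)\<^sup>2 = (\<Sum>l\<in>{k}. (cmod (\<Sum>b\<in>T. d b k * cnj (d b l)))\<^sup>2)" by simp
    also have "\<dots> \<le> (\<Sum>l<m. (cmod (\<Sum>b\<in>T. d b k * cnj (d b l)))\<^sup>2)"
      using k by (intro sum_mono2) auto
    finally show "(t k)\<^sup>2 \<le> (\<Sum>l<m. (cmod (\<Sum>b\<in>T. d b k * cnj (d b l)))\<^sup>2)" .
  qed
  also have "\<dots> = Re (\<Sum>a\<in>S. \<Sum>a'\<in>S. (\<Sum>b\<in>T. \<Psi> a b * cnj (\<Psi> a' b)) * (\<Sum>b\<in>T. \<Psi> a' b * cnj (\<Psi> a b)))"
    by (simp only: pur Re_complex_of_real gram_swap)
  finally have P: "(\<Sum>k<m. (t k)\<^sup>2) \<le> Re (\<Sum>a\<in>S. \<Sum>a'\<in>S. (\<Sum>b\<in>T. \<Psi> a b * cnj (\<Psi> a' b)) * (\<Sum>b\<in>T. \<Psi> a' b * cnj (\<Psi> a b)))" .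
  have "(\<Sum>b\<in>T. \<Sum>a\<in>S. (cmod (\<Psi> a b))\<^sup>2)\<^sup>2 \<le> real m * (\<Sum>k<m. (t k)\<^sup>2)"
    unfolding trace by (rule cs_card)
  also have "\<dots> \<le> real R * (\<Sum>k<m. (t k)\<^sup>2)"
    using m by (intro mult_right_mono) (auto simp: sum_nonneg)
  also have "\<dots> \<le> real R * Re (\<Sum>a\<in>S. \<Sum>a'\<in>S. (\<Sum>b\<in>T. \<Psi> a b * cnj (\<Psi> a' b)) * (\<Sum>b\<in>T. \<Psi> a' b * cnj (\<Psi> a b)))"
    using P by (intro mult_left_mono) auto
  finally show ?thesis .
qed

lemma finite_bits: "finite (bits n)"
proof -
  have "bits n = {xs. set xs \<subseteq> (UNIV::bool set) \<and> length xs = n}" unfolding bits_def by auto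
  thus ?thesis using finite_lists_length_eq[of "UNIV :: bool set" n] by simp
qed

lemma prod_indicator_bits:
  assumes "x \<in> bits n" "y \<in> bits n"
  shows "(\<Prod>j<n. (if x ! j = y ! j then 1 else 0 :: complex)) = (if x = y then 1 else 0)"
proof (cases "x = y")
  case True thus ?thesis by simp
next
  case False
  have "\<exists>j<n. x ! j \<noteq> y ! j"
    using assms False unfolding bits_def by (auto simp: list_eq_iff_nth_eq)
  then obtain j where j: "j < n" "x ! j \<noteq> y ! j" by blast
  have "(\<Prod>j<n. (if x ! j = y ! j then 1 else 0 :: complex)) = 0"
    by (rule prod_zero) (use j in auto)
  thus ?thesis using False by simp
qed

lemma cp_rank_dec:
  "\<exists>(c :: nat \<Rightarrow> complex) (\<phi> :: nat \<Rightarrow> nat \<Rightarrow> bool \<Rightarrow> complex).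
      \<forall>x\<in>bits n. \<psi> x = (\<Sum>i<cp_rank n \<psi>. c i * (\<Prod>j<n. \<phi> i j (x ! j)))"
proof -
  obtain N :: nat and f where f: "bits n = f ` {i. i < N}" and inj: "inj_on f {i. i < N}"
    using finite_imp_nat_seg_image_inj_on[OF finite_bits] by blast
  have "\<exists>(c :: nat \<Rightarrow> complex) (\<phi> :: nat \<Rightarrow> nat \<Rightarrow> bool \<Rightarrow> complex).
      \<forall>x\<in>bits n. \<psi> x = (\<Sum>i<N. c i * (\<Prod>j<n. \<phi> i j (x ! j)))"
  proof (intro exI[of _ "\<lambda>i. \<psi> (f i)"] exI[of _ "\<lambda>i j b. if b = f i ! j then 1 else 0"] ballI)
    fix x assume x: "x \<in> bits n"
    have "(\<Sum>i<N. \<psi> (f i) * (\<Prod>j<n. (if x ! j = f i ! j then 1 else 0)))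
        = (\<Sum>i\<in>{i. i < N}. \<psi> (f i) * (if x = f i then 1 else 0))"
    proof (rule sum.cong)
      show "{..<N} = {i. i < N}" by auto
    next
      fix i assume "i \<in> {i. i < N}"
      hence "f i \<in> bits n" using f by auto
      thus "\<psi> (f i) * (\<Prod>j<n. (if x ! j = f i ! j then 1 else 0)) = \<psi> (f i) * (if x = f i then 1 else 0)"
        by (simp only: prod_indicator_bits[OF x])
    qed
    also have "\<dots> = (\<Sum>y\<in>bits n. \<psi> y * (if x = y then 1 else 0))"
      unfolding f by (rule sum.reindex[OF inj, symmetric, unfolded comp_def])
    also have "\<dots> = \<psi> x" using x finite_bits by (simp add: if_distrib cong: if_cong)
    finally show "\<psi> x = (\<Sum>i<N. \<psi> (f i) * (\<Prod>j<n. (if x ! j = f i ! j then 1 else 0)))" by simp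
  qed
  thus ?thesis unfolding cp_rank_def
    by (rule LeastI[where P = "\<lambda>r. \<exists>(c :: nat \<Rightarrow> complex) (\<phi> :: nat \<Rightarrow> nat \<Rightarrow> bool \<Rightarrow> complex).
      \<forall>x\<in>bits n. \<psi> x = (\<Sum>i<r. c i * (\<Prod>j<n. \<phi> i j (x ! j)))"])
qed

lemma length_combine[simp]: "length (combine n \<alpha> a b) = n"
  by (simp add: combine_def)

lemma nth_combine[simp]: "j < n \<Longrightarrow> combine n \<alpha> a b ! j = (if j \<in> \<alpha> then a ! j else b ! j)"
  by (simp add: combine_def)

definition bmask :: "nat \<Rightarrow> nat set \<Rightarrow> bool list \<Rightarrow> bool list" where
  "bmask n \<beta> x = map (\<lambda>i. i \<in> \<beta> \<and> x ! i) [0..<n]"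

lemma trace_combine:
  "(\<Sum>b\<in>sub_bits n ({0..<n} - \<alpha>). \<Sum>a\<in>sub_bits n \<alpha>. g (combine n \<alpha> a b)) = (\<Sum>x\<in>bits n. g x)"
proof -
  have "(\<Sum>b\<in>sub_bits n ({0..<n} - \<alpha>). \<Sum>a\<in>sub_bits n \<alpha>. g (combine n \<alpha> a b))
      = (\<Sum>a\<in>sub_bits n \<alpha>. \<Sum>b\<in>sub_bits n ({0..<n} - \<alpha>). g (combine n \<alpha> a b))"
    by (rule sum.swap)
  also have "\<dots> = (\<Sum>p\<in>sub_bits n \<alpha> \<times> sub_bits n ({0..<n} - \<alpha>). g (combine n \<alpha> (fst p) (snd p)))"
    by (simp add: sum.cartesian_product case_prod_beta)
  also have "\<dots> = (\<Sum>x\<in>bits n. g x)"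
  proof (rule sum.reindex_bij_witness[where i = "\<lambda>x. (bmask n \<alpha> x, bmask n ({0..<n} - \<alpha>) x)"
        and j = "\<lambda>p. combine n \<alpha> (fst p) (snd p)"])
    fix p assume p: "p \<in> sub_bits n \<alpha> \<times> sub_bits n ({0..<n} - \<alpha>)"
    obtain a b where ab: "p = (a, b)" by force
    have a: "length a = n" "\<And>i. i < n \<Longrightarrow> i \<notin> \<alpha> \<Longrightarrow> \<not> a ! i"
      and b: "length b = n" "\<And>i. i < n \<Longrightarrow> i \<in> \<alpha> \<Longrightarrow> \<not> b ! i"
      using p ab unfolding sub_bits_def bits_def by auto
    have "bmask n \<alpha> (combine n \<alpha> a b) = a"
      using a by (intro nth_equalityI) (auto simp: bmask_def)
    moreover have "bmask n ({0..<n} - \<alpha>) (combine n \<alpha> a b) = b"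
      using b by (intro nth_equalityI) (auto simp: bmask_def)
    ultimately show "(bmask n \<alpha> (combine n \<alpha> (fst p) (snd p)), bmask n ({0..<n} - \<alpha>) (combine n \<alpha> (fst p) (snd p))) = p"
      using ab by simp
    show "combine n \<alpha> (fst p) (snd p) \<in> bits n" by (simp add: bits_def)
  next
    fix x assume x: "x \<in> bits n"
    show "combine n \<alpha> (fst (bmask n \<alpha> x, bmask n ({0..<n} - \<alpha>) x)) (snd (bmask n \<alpha> x, bmask n ({0..<n} - \<alpha>) x)) = x"
      using x by (intro nth_equalityI) (auto simp: bmask_def bits_def)
    show "(bmask n \<alpha> x, bmask n ({0..<n} - \<alpha>) x) \<in> sub_bits n \<alpha> \<times> sub_bits n ({0..<n} - \<alpha>)"
      by (auto simp: bmask_def sub_bits_def bits_def)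
  qed simp
  finally show ?thesis .
qed

lemma purity_lower:
  assumes st: "is_pure_state n \<psi>" and R: "cp_rank n \<psi> = R" and R0: "R > 0"
  shows "purity n \<alpha> \<psi> \<ge> 1 / real R"
proof -
  obtain c \<phi> where dec: "\<forall>x\<in>bits n. \<psi> x = (\<Sum>i<R. c i * (\<Prod>j<n. \<phi> i j (x ! j)))"
    using cp_rank_dec[of n \<psi>] R by blast
  define S where "S = sub_bits n \<alpha>"
  define T where "T = sub_bits n ({0..<n} - \<alpha>)"
  have fS: "finite S" unfolding S_def sub_bits_def using finite_bits by simp
  have fT: "finite T" unfolding T_def sub_bits_def using finite_bits by simp
  define u where "u i a = c i * (\<Prod>j\<in>{..<n} \<inter> {j. j \<in> \<alpha>}. \<phi> i j (a ! j))" for i a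
  define w where "w i b = (\<Prod>j\<in>{..<n} \<inter> - {j. j \<in> \<alpha>}. \<phi> i j (b ! j))" for i b
  have dec2: "\<psi> (combine n \<alpha> a b) = (\<Sum>i<R. u i a * w i b)" for a b
  proof -
    have "\<psi> (combine n \<alpha> a b) = (\<Sum>i<R. c i * (\<Prod>j<n. \<phi> i j (combine n \<alpha> a b ! j)))"
      using dec by (simp add: bits_def)
    also have "\<dots> = (\<Sum>i<R. u i a * w i b)"
    proof (intro sum.cong refl)
      fix i
      have "(\<Prod>j<n. \<phi> i j (combine n \<alpha> a b ! j)) = (\<Prod>j<n. if j \<in> \<alpha> then \<phi> i j (a ! j) else \<phi> i j (b ! j))"
        by (intro prod.cong) auto
      also have "\<dots> = (\<Prod>j\<in>{..<n} \<inter> {j. j \<in> \<alpha>}. \<phi> i j (a ! j)) * (\<Prod>j\<in>{..<n} \<inter> - {j. j \<in> \<alpha>}. \<phi> i j (b ! j))"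
        by (rule prod.If_cases) simp
      finally show "c i * (\<Prod>j<n. \<phi> i j (combine n \<alpha> a b ! j)) = u i a * w i b"
        by (simp add: u_def w_def)
    qed
    finally show ?thesis .
  qed
  have tr: "(\<Sum>b\<in>T. \<Sum>a\<in>S. (cmod (\<psi> (combine n \<alpha> a b)))\<^sup>2) = 1"
    using st trace_combine[of "\<lambda>x. (cmod (\<psi> x))\<^sup>2" n \<alpha>] unfolding S_def T_def is_pure_state_def by simp
  have "(\<Sum>b\<in>T. \<Sum>a\<in>S. (cmod (\<psi> (combine n \<alpha> a b)))\<^sup>2)\<^sup>2 \<le> real R * purity n \<alpha> \<psi>"
    unfolding purity_def reduced_state_def S_def[symmetric] T_def[symmetric]
    by (rule purity_core[OF fS fT, where \<Psi> = "\<lambda>a b. \<psi> (combine n \<alpha> a b)" and R = R and u = u and w = w]) (simp add: dec2)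
  hence "1 \<le> real R * purity n \<alpha> \<psi>" using tr by simp
  thus ?thesis using R0 by (simp add: field_simps)
qed

lemma conc_bound:
  assumes st: "is_pure_state n \<psi>" and R: "cp_rank n \<psi> = R" and R0: "R > 0"
  shows "conc_ent n \<psi> \<le> (real R - 1) / real R"
proof -
  have "(\<Sum>\<alpha>\<in>Pow {0..<n}. 1 / real R) \<le> (\<Sum>\<alpha>\<in>Pow {0..<n}. purity n \<alpha> \<psi>)"
    using purity_lower[OF st R R0] by (intro sum_mono) auto
  moreover have "(\<Sum>\<alpha>\<in>Pow {0..<n}. 1 / real R) = 2 ^ n / real R"
    by (simp add: card_Pow)
  ultimately have "(1 / 2 ^ n) * (2 ^ n / real R) \<le> (1 / 2 ^ n) * (\<Sum>\<alpha>\<in>Pow {0..<n}. purity n \<alpha> \<psi>)"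
    by (intro mult_left_mono) auto
  hence "1 / real R \<le> (1 / 2 ^ n) * (\<Sum>\<alpha>\<in>Pow {0..<n}. purity n \<alpha> \<psi>)" by simp
  thus ?thesis unfolding conc_ent_def using R0 by (simp add: diff_divide_distrib)
qed

lemma binom_half: "(\<Sum>k=0..n. real (n choose k) * (1/2) ^ k) = (3/2) ^ n"
  using binomial_ring[of "1/2 :: real" 1 n] by (simp add: atLeast0AtMost)

lemma binom_half2: "(\<Sum>k=0..n. real (n choose k) * (1/2) ^ (n - k)) = (3/2) ^ n"
  using binomial_ring[of "1 :: real" "1/2" n] by (simp add: atLeast0AtMost)

lemma bR_upper:
  assumes "R > 0"
  shows "b_R R n \<le> 1 - 1 / real R"
proof -
  have "(\<Sum>k=0..n. real (n choose k) * (1 / real R)) \<le> (\<Sum>k=0..n. real (n choose k) * max (1 / real R) ((1/2) ^ min k (n - k)))"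
    by (intro sum_mono mult_left_mono) auto
  moreover have "(\<Sum>k=0..n. real (n choose k) * (1 / real R)) = 2 ^ n / real R"
  proof -
    have "(\<Sum>k=0..n. real (n choose k)) = 2 ^ n"
      using choose_row_sum[of n] by (simp add: atLeast0AtMost flip: of_nat_sum)
    thus ?thesis by (simp add: sum_divide_distrib[symmetric])
  qed
  ultimately have "(1 / 2 ^ n) * (2 ^ n / real R) \<le> (1 / 2 ^ n) * (\<Sum>k=0..n. real (n choose k) * max (1 / real R) ((1/2) ^ min k (n - k)))"
    by (intro mult_left_mono) auto
  thus ?thesis unfolding b_R_def by simp
qed

lemma bR_lower:
  assumes "R > 0"
  shows "1 - 1 / real R - 2 * (3/4) ^ n \<le> b_R R n"
proof -
  have "(\<Sum>k=0..n. real (n choose k) * max (1 / real R) ((1/2) ^ min k (n - k)))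
      \<le> (\<Sum>k=0..n. real (n choose k) * (1 / real R) + real (n choose k) * (1/2) ^ k + real (n choose k) * (1/2) ^ (n - k))"
  proof (intro sum_mono)
    fix k
    have "((1/2::real) ^ min k (n - k)) \<le> (1/2) ^ k + (1/2) ^ (n - k)"
      by (cases "k \<le> n - k") (auto simp: min_def intro: add_increasing add_increasing2)
    hence "max (1 / real R) ((1/2) ^ min k (n - k)) \<le> 1 / real R + (1/2) ^ k + (1/2) ^ (n - k)"
    proof -
      have "0 \<le> 1 / real R" by simp
      have gen: "\<And>y a b r::real. y \<le> a + b \<Longrightarrow> 0 \<le> r \<Longrightarrow> 0 \<le> a \<Longrightarrow> 0 \<le> b \<Longrightarrow> max r y \<le> r + a + b"
        by linarith
      show ?thesis by (rule gen) (use \<open>0 \<le> 1 / real R\<close> \<open>((1/2::real) ^ min k (n - k)) \<le> (1/2) ^ k + (1/2) ^ (n - k)\<close> in auto)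
    qed
    hence "real (n choose k) * max (1 / real R) ((1/2) ^ min k (n - k)) \<le> real (n choose k) * (1 / real R + (1/2) ^ k + (1/2) ^ (n - k))"
      by (intro mult_left_mono) auto
    thus "real (n choose k) * max (1 / real R) ((1/2) ^ min k (n - k)) \<le> real (n choose k) * (1 / real R) + real (n choose k) * (1/2) ^ k + real (n choose k) * (1/2) ^ (n - k)"
      by (simp add: algebra_simps)
  qed
  also have "\<dots> = 2 ^ n / real R + (3/2) ^ n + (3/2) ^ n"
  proof -
    have "(\<Sum>k=0..n. real (n choose k)) = 2 ^ n"
      using choose_row_sum[of n] by (simp add: atLeast0AtMost flip: of_nat_sum)
    hence "(\<Sum>k=0..n. real (n choose k) * (1 / real R)) = 2 ^ n / real R"
      by (simp add: sum_divide_distrib[symmetric])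
    thus ?thesis by (simp add: sum.distrib binom_half binom_half2)
  qed
  finally have A: "(\<Sum>k=0..n. real (n choose k) * max (1 / real R) ((1/2) ^ min k (n - k))) \<le> 2 ^ n / real R + 2 * (3/2) ^ n"
    by simp
  have "(1 / 2 ^ n) * (\<Sum>k=0..n. real (n choose k) * max (1 / real R) ((1/2) ^ min k (n - k)))
     \<le> (1 / 2 ^ n) * (2 ^ n / real R + 2 * (3/2) ^ n)"
    using A by (intro mult_left_mono) auto
  also have "\<dots> = 1 / real R + 2 * (3/4) ^ n"
  proof -
    have f: "(4::real) ^ n = 2 ^ n * 2 ^ n" by (simp flip: power_mult_distrib)
    show ?thesis by (simp add: field_simps power_divide f)
  qed
  finally show ?thesis unfolding b_R_def by simp
qed

lemma bR_limit:
  assumes "R > 0"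
  shows "(\<lambda>n. b_R R n) \<longlonglongrightarrow> (real R - 1) / real R"
proof -
  have eq: "(real R - 1) / real R = 1 - 1 / real R" using assms by (simp add: diff_divide_distrib)
  have "(\<lambda>n. 1 - 1 / real R - 2 * (3/4::real) ^ n) \<longlonglongrightarrow> 1 - 1 / real R - 2 * 0"
    by (intro tendsto_intros LIMSEQ_power_zero) auto
  hence L: "(\<lambda>n. 1 - 1 / real R - 2 * (3/4::real) ^ n) \<longlonglongrightarrow> 1 - 1 / real R" by simp
  show ?thesis unfolding eq
    by (rule tendsto_sandwich[OF _ _ L tendsto_const]) (use bR_lower[OF assms] bR_upper[OF assms] in auto)
qed

theorem corollary2:
  fixes R :: nat
  assumes "R > 0"
  shows "((\<lambda>n. b_R R n) \<longlonglongrightarrow> (real R - 1) / real R) \<and>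
         limsup (\<lambda>n. SUP \<psi>\<in>{\<psi>. is_pure_state n \<psi> \<and> cp_rank n \<psi> = R}. ereal (conc_ent n \<psi>))
           \<le> ereal ((real R - 1) / real R)"
proof
  show "(\<lambda>n. b_R R n) \<longlonglongrightarrow> (real R - 1) / real R" by (rule bR_limit[OF assms])
  show "limsup (\<lambda>n. SUP \<psi>\<in>{\<psi>. is_pure_state n \<psi> \<and> cp_rank n \<psi> = R}. ereal (conc_ent n \<psi>))
           \<le> ereal ((real R - 1) / real R)"
  proof (rule Limsup_bounded, rule always_eventually, rule allI)
    fix n
    show "(SUP \<psi>\<in>{\<psi>. is_pure_state n \<psi> \<and> cp_rank n \<psi> = R}. ereal (conc_ent n \<psi>)) \<le> ereal ((real R - 1) / real R)"
      using conc_bound[OF _ _ assms] by (intro SUP_least) auto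
  qed
qed

end
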